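(* For all integers $n,d$ with $n\ge h$ and $0\le d\le\rho(m)-1$: \[ \sum_{i=0}^{\rho(m)-1}\mu_i\;\le\;\sum_{f=1}^h y(n-f)\;\le\;\rho(m)+\sum_{i=0}^{\rho(m)-1}\mu_i, \] and \[ \sum_{i=d+1}^{\rho(m)-1}\mu_i\;\le\;\sum_{f=1}^h w(n-f,d)\;\le\;\rho(m)-d-1+\sum_{i=0}^{\rho(m)-1}\mu_i . \]
   Context: For $u\in\mathbb{R}$ let $\mathbf 1[u]=1$ if $u\ge 0$ and $\mathbf 1[u]=0$ if $u<0$. Let $m$ be a positive integer and let $\rho(m)$ denote the number of primes $p$ with $2m<p<3m$; assume $\rho(m)\ge 2$. List these primes as $p_0>p_1>\dots>p_{\rho(m)-1}$ and put $\alpha_i=3m-p_i$. Let $k=(6m-1)\rho(m)$, $\mu_i=\lfloor k/p_i\rfloor$, $\beta_i=k-p_i\mu_i$. Define weights $\bar a_j$, $1\le j\le k$: if $\rho(m)$ is even, $\bar a_j=2$ if $j=\ell p_i$ for some $i$ and some $\ell$ with $1\le \ell\le 3\rho(m)/2$, $\bar a_j=-2$ if $j=\ell p_i$ with $3\rho(m)/2<\ell\le 2\rho(m)$, and $\bar a_j=0$ otherwise; if $\rho(m)$ is odd, $\bar a_j=2$ if $j=\ell p_i$ with $1\le\ell\le (3\rho(m)-1)/2$, $\bar a_j=-2$ if $j=\ell p_i$ with $(3\rho(m)+1)/2\le \ell\le 2\rho(m)-2$, $\bar a_j=-1$ if $j=\ell p_i$ with $\ell\in\{2\rho(m)-1,2\rho(m)\}$,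 and $\bar a_j=0$ otherwise (well defined since the sets $\{\ell p_i:1\le\ell\le2\rho(m)\}$ are pairwise disjoint). Let $\bar\theta=2\rho(m)$. For each $i$ define $x^{\alpha_i}(t)$ for $0\le t\le k-1$ by $x^{\alpha_i}(t)=1$ if $t=\beta_i+\ell p_i$ for some $0\le \ell\le\mu_i-1$ and $x^{\alpha_i}(t)=0$ otherwise, and for $t\ge k$ by $x^{\alpha_i}(t)=\mathbf 1\big[\sum_{j=1}^k \bar a_j x^{\alpha_i}(t-j)-\bar\theta\big]$. Let $h=\rho(m)k$. For $1\le f\le h$ let $b_f=\bar a_j$ if $f=\rho(m)j$ with $1\le j\le k$, and $b_f=0$ otherwise. Define $(y(n))_{n\ge0}$ by $y(\rho(m)j+i)=x^{\alpha_i}(1+j)$ for $0\le j\le k-1$, $0\le i\le\rho(m)-1$, and $y(n)=\mathbf 1\big[\sum_{f=1}^h b_f y(n-f)-\bar\theta\big]$ for $n\ge h$. Let $L_1(d)=\rho(m)\cdot\mathrm{lcm}(p_0,\dots,p_d)$ for $0\le d\le\rho(m)-1$. For $0\le d\le\rho(m)-1$ define $(w(n,d))_{n\ge0}$ by: for $0\le i\le d$, $w(\rho(m)j+i,d)=x^{\alpha_i}(1+j)$ for $0\le j\le k-2$ and $w(\rho(m)(k-1)+i,d)=1-x^{\alpha_i}(k)$; for $d+1\le i\le\rho(m)-1$ and $0\le j\le k-1$, $w(\rho(m)j+i,d)=y(\rho(m)j+i+L_1(d))$; and $w(n,d)=\mathbf 1\big[\sum_{f=1}^h b_f w(n-f,d)-\bar\theta\big]$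 for $n\ge h$. *)

theory Defs
  imports "HOL-Computational_Algebra.Primes"
begin

definition ind :: "int \<Rightarrow> int" where
  "ind u = (if u \<ge> 0 then 1 else 0)"

function thr :: "(nat \<Rightarrow> int) \<Rightarrow> nat \<Rightarrow> (nat \<Rightarrow> int) \<Rightarrow> int \<Rightarrow> nat \<Rightarrow> int" where
  "thr a K init \<theta> n =
     (if n < K then init n
      else ind ((\<Sum>f=1..K. a f * thr a K init \<theta> (n - f)) - \<theta>))"
  by pat_completeness auto
termination
  by (relation "measure (\<lambda>(a, K, init, \<theta>, n). n)") auto

definition primeset :: "nat \<Rightarrow> nat set" where
  "primeset m = {p. prime p \<and> 2 * m < p \<and> p < 3 * m}"

definition rho :: "nat \<Rightarrow> nat" where
  "rho m = card (primeset m)"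

definition pr :: "nat \<Rightarrow> nat \<Rightarrow> nat" where
  "pr m i = rev (sorted_list_of_set (primeset m)) ! i"

definition kk :: "nat \<Rightarrow> nat" where
  "kk m = (6 * m - 1) * rho m"

definition mu :: "nat \<Rightarrow> nat \<Rightarrow> nat" where
  "mu m i = kk m div pr m i"

definition beta :: "nat \<Rightarrow> nat \<Rightarrow> nat" where
  "beta m i = kk m - pr m i * mu m i"

definition mult_in :: "nat \<Rightarrow> nat \<Rightarrow> nat \<Rightarrow> nat \<Rightarrow> bool" where
  "mult_in m lo hi j = (\<exists>i<rho m. \<exists>l. lo \<le> l \<and> l \<le> hi \<and> j = l * pr m i)"

definition abar :: "nat \<Rightarrow> nat \<Rightarrow> int" where
  "abar m j =
    (if even (rho m) then
       (if mult_in m 1 (3 * rho m div 2) j then 2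
        else if mult_in m (3 * rho m div 2 + 1) (2 * rho m) j then -2
        else 0)
     else
       (if mult_in m 1 ((3 * rho m - 1) div 2) j then 2
        else if mult_in m ((3 * rho m + 1) div 2) (2 * rho m - 2) j then -2
        else if mult_in m (2 * rho m - 1) (2 * rho m) j then -1
        else 0))"

definition thetabar :: "nat \<Rightarrow> int" where
  "thetabar m = 2 * int (rho m)"

definition x_init :: "nat \<Rightarrow> nat \<Rightarrow> nat \<Rightarrow> int" where
  "x_init m i t = (if \<exists>l. l < mu m i \<and> t = beta m i + l * pr m i then 1 else 0)"

definition xa :: "nat \<Rightarrow> nat \<Rightarrow> nat \<Rightarrow> int" where
  "xa m i = thr (abar m) (kk m) (x_init m i) (thetabar m)"

definition hh :: "nat \<Rightarrow> nat" where
  "hh m = rho m * kk m"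

definition bb :: "nat \<Rightarrow> nat \<Rightarrow> int" where
  "bb m f = (if \<exists>j. 1 \<le> j \<and> j \<le> kk m \<and> f = rho m * j then abar m (f div rho m) else 0)"

definition y_init :: "nat \<Rightarrow> nat \<Rightarrow> int" where
  "y_init m n = xa m (n mod rho m) (1 + n div rho m)"

definition yy :: "nat \<Rightarrow> nat \<Rightarrow> int" where
  "yy m = thr (bb m) (hh m) (y_init m) (thetabar m)"

definition L1 :: "nat \<Rightarrow> nat \<Rightarrow> nat" where
  "L1 m d = rho m * Lcm (pr m ` {0..d})"

definition w_init :: "nat \<Rightarrow> nat \<Rightarrow> nat \<Rightarrow> int" where
  "w_init m d n =
    (let i = n mod rho m; j = n div rho m in
     if i \<le> d then
       (if j \<le> kk m - 2 then xa m i (1 + j) else 1 - xa m i (kk m))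
     else yy m (n + L1 m d))"

definition ww :: "nat \<Rightarrow> nat \<Rightarrow> nat \<Rightarrow> int" where
  "ww m d = thr (bb m) (hh m) (w_init m d) (thetabar m)"

end

theory Submission
  imports Defs "HOL-Number_Theory.Cong"
begin


definition recs :: "(nat \<Rightarrow> int) \<Rightarrow> nat \<Rightarrow> int \<Rightarrow> (nat \<Rightarrow> int) \<Rightarrow> bool" where
  "recs a K \<theta> s = (\<forall>t\<ge>K. s t = ind ((\<Sum>j=1..K. a j * s (t - j)) - \<theta>))"

lemma thr_recs: "recs a K \<theta> (thr a K init \<theta>)"
  unfolding recs_def by (auto simp del: thr.simps intro: trans[OF thr.simps])

lemma thr_init: "t < K \<Longrightarrow> thr a K init \<theta> t = init t"
  by (subst thr.simps) simp

lemma recs_unique: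
  assumes "recs a K \<theta> s" "recs a K \<theta> s'" "\<forall>t<K. s t = s' t"
  shows "s t = s' t"
proof (induction t rule: less_induct)
  case (less t)
  show ?case
  proof (cases "t < K")
    case True then show ?thesis using assms(3) by auto
  next
    case False
    have "(\<Sum>j=1..K. a j * s (t - j)) = (\<Sum>j=1..K. a j * s' (t - j))"
      by (rule sum.cong) (use less False in auto)
    then show ?thesis using assms(1,2) False unfolding recs_def by auto
  qed
qed

lemma recs_shift:
  assumes "recs a K \<theta> s" shows "recs a K \<theta> (\<lambda>t. s (t + c))"
  unfolding recs_def
proof (intro allI impI)
  fix t assume t: "K \<le> t"
  have "(\<Sum>j=1..K. a j * s (t + c - j)) = (\<Sum>j=1..K. a j * s (t - j + c))"
    by (rule sum.cong) (use t in auto)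
  then show "s (t + c) = ind ((\<Sum>j=1..K. a j * s (t - j + c)) - \<theta>)"
    using assms t unfolding recs_def by (metis trans_le_add1)
qed

lemma sum_mult:
  fixes g :: "nat \<Rightarrow> int"
  assumes "0 < p" "\<forall>j\<in>{1..K}. \<not> p dvd j \<longrightarrow> g j = 0"
  shows "(\<Sum>j=1..K. g j) = (\<Sum>l=1..K div p. g (l*p))"
proof -
  have "(\<Sum>j=1..K. g j) = (\<Sum>j\<in>{j\<in>{1..K}. p dvd j}. g j)"
    by (rule sum.mono_neutral_right) (use assms in auto)
  also have "{j\<in>{1..K}. p dvd j} = (\<lambda>l. l*p) ` {1..K div p}"
  proof
    show "{j \<in> {1..K}. p dvd j} \<subseteq> (\<lambda>l. l * p) ` {1..K div p}"
    proof
      fix j assume "j \<in> {j \<in> {1..K}. p dvd j}"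
      then obtain l where j: "j = l * p" "1 \<le> j" "j \<le> K" by (auto elim!: dvdE simp: mult.commute)
      then have "1 \<le> l" by (cases l) auto
      moreover have "l \<le> K div p" using j assms(1) by (simp add: less_eq_div_iff_mult_less_eq)
      ultimately show "j \<in> (\<lambda>l. l * p) ` {1..K div p}" using j by auto
    qed
  next
    show "(\<lambda>l. l * p) ` {1..K div p} \<subseteq> {j \<in> {1..K}. p dvd j}"
      using assms(1) by (auto simp: less_eq_div_iff_mult_less_eq)
  qed
  also have "(\<Sum>j\<in>(\<lambda>l. l*p) ` {1..K div p}. g j) = (\<Sum>l=1..K div p. g (l*p))"
    by (rule sum.reindex_cong[where l="\<lambda>l. l*p"]) (use assms(1) in \<open>auto simp: inj_on_def\<close>)
  finally show ?thesis .
qed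

lemma sum_split: "(\<Sum>q<a+b. g q) = (\<Sum>q<a. g q) + (\<Sum>q<b. (g (a+q)::int))" for a b :: nat
  by (induction b) auto

lemma win_period:
  fixes g :: "nat \<Rightarrow> int"
  assumes "\<forall>x. g (x + p) = g x"
  shows "(\<Sum>q<p. g (q + c)) = (\<Sum>q<p. g q)"
proof (induction c)
  case 0 then show ?case by simp
next
  case (Suc c)
  show ?case
  proof (cases p)
    case 0 then show ?thesis by simp
  next
    case (Suc n)
    have "(\<Sum>q<p. g (q + Suc c)) = (\<Sum>q<n. g (Suc q + c)) + g (n + Suc c)"
      using Suc by simp
    moreover have "(\<Sum>q<p. g (q + c)) = g c + (\<Sum>q<n. g (Suc q + c))"
      using Suc by (simp add: sum.lessThan_Suc_shift del: sum.lessThan_Suc)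
    moreover have "g (n + Suc c) = g c" using assms Suc by (metis add.commute add_Suc_right)
    ultimately show ?thesis using Suc.IH by simp
  qed
qed

lemma cls_block:
  assumes "0 < p" "r < p"
  shows "(\<Sum>q<l*p. (if (q + c) mod p = r then 1 else 0::int)) = int l"
proof (induction l)
  case 0 then show ?case by simp
next
  case (Suc l)
  have per: "(\<Sum>q<p. (if (q + (l*p+c)) mod p = r then 1 else 0::int)) = (\<Sum>q<p. (if q mod p = r then 1 else 0::int))"
    by (rule win_period[where g="\<lambda>q. if q mod p = r then 1 else 0"]) simp
  have "(\<Sum>q<p. (if q mod p = r then 1 else 0::int)) = (\<Sum>q<p. (if q = r then 1 else 0::int))"
    by (rule sum.cong) auto
  also have "\<dots> = 1" using assms by simp
  finally have one: "(\<Sum>q<p. (if (q + (l*p+c)) mod p = r then 1 else 0::int)) = 1" using per by simp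
  have "(\<Sum>q<Suc l*p. (if (q + c) mod p = r then 1 else 0::int)) =
        (\<Sum>q<l*p. (if (q + c) mod p = r then 1 else 0::int)) + (\<Sum>q<p. (if (l*p + q + c) mod p = r then 1 else 0::int))"
    using sum_split[of "\<lambda>q. (if (q + c) mod p = r then 1 else 0::int)" "l*p" p] by (simp add: add.commute add.left_commute)
  also have "(\<Sum>q<p. (if (l*p + q + c) mod p = r then 1 else 0::int)) = 1"
    using one by (simp add: ac_simps)
  finally show ?case using Suc.IH by simp
qed

lemma cls_window:
  assumes "0 < p" "r < p"
  shows "int (K div p) \<le> (\<Sum>q<K. (if (q + c) mod p = r then 1 else 0::int))
       \<and> (\<Sum>q<K. (if (q + c) mod p = r then 1 else 0::int)) \<le> int (K div p) + 1"
proof -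
  define g where "g = (\<lambda>q. (if (q + c) mod p = r then 1 else 0::int))"
  have K: "K = (K div p) * p + K mod p" by simp
  have "(\<Sum>q<K. g q) = (\<Sum>q<(K div p)*p. g q) + (\<Sum>q<K mod p. g ((K div p)*p + q))"
    by (subst K, rule sum_split)
  moreover have "(\<Sum>q<(K div p)*p. g q) = int (K div p)" unfolding g_def by (rule cls_block[OF assms])
  moreover have "0 \<le> (\<Sum>q<K mod p. g ((K div p)*p + q))" unfolding g_def by (rule sum_nonneg) auto
  moreover have "(\<Sum>q<K mod p. g ((K div p)*p + q)) \<le> (\<Sum>q<p. g ((K div p)*p + q))"
    by (rule sum_mono2) (use assms in \<open>auto simp: g_def\<close>)
  moreover have "(\<Sum>q<p. g ((K div p)*p + q)) = 1"
    using cls_block[OF assms, where l=1 and c="(K div p)*p + c"] unfolding g_def by (simp add: ac_simps)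
  ultimately show ?thesis unfolding g_def by linarith
qed

lemma assemble:
  fixes G :: "nat \<Rightarrow> int"
  assumes "0 < r" "\<forall>i<r. \<forall>c. lo i \<le> (\<Sum>q<K. G (r*(q+c)+i)) \<and> (\<Sum>q<K. G (r*(q+c)+i)) \<le> hi i"
  shows "(\<Sum>i<r. lo i) \<le> (\<Sum>x<r*K. G (s + x)) \<and> (\<Sum>x<r*K. G (s + x)) \<le> (\<Sum>i<r. hi i)"
proof -
  define W where "W i c = (\<Sum>q<K. G (r*(q+c)+i))" for i c
  have "(\<Sum>x<r*K. G (s + x)) = (\<Sum>q<K. (\<Sum>x\<in>{q*r..<q*r+r}. G (s + x)))"
    using sum.nat_group[of "\<lambda>x. G (s + x)" r K] by (simp add: mult.commute)
  also have "\<dots> = (\<Sum>q<K. (\<Sum>i<r. G (s + (q*r + i))))"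
  proof (rule sum.cong, simp)
    fix q
    have "(\<Sum>x\<in>{q*r..<q*r+r}. G (s+x)) = (\<Sum>x\<in>{0+q*r..<r+q*r}. G (s+x))" by (simp add: add.commute)
    also have "\<dots> = (\<Sum>i\<in>{0..<r}. G (s+(i+q*r)))" by (rule sum.shift_bounds_nat_ivl)
    also have "\<dots> = (\<Sum>i<r. G (s+(q*r+i)))" by (simp add: atLeast0LessThan add.commute)
    finally show "(\<Sum>x\<in>{q*r..<q*r+r}. G (s+x)) = (\<Sum>i<r. G (s+(q*r+i)))" .
  qed
  also have "\<dots> = (\<Sum>i<r. (\<Sum>q<K. G (s + (q*r + i))))" by (rule sum.swap)
  also have "\<dots> = (\<Sum>i<r. W ((i + s) mod r) ((i+s) div r))"
  proof (rule sum.cong, simp)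
    fix i assume "i \<in> {..<r}"
    show "(\<Sum>q<K. G (s + (q*r + i))) = W ((i + s) mod r) ((i+s) div r)"
      unfolding W_def
    proof (rule sum.cong, simp)
      fix q
      have "s + (q*r+i) = r*(q + (i+s) div r) + (i+s) mod r"
        using div_mult_mod_eq[of "i+s" r] by (simp add: algebra_simps)
      then show "G (s + (q*r + i)) = G (r*(q + (i+s) div r) + (i+s) mod r)" by simp
    qed
  qed
  finally have eq: "(\<Sum>x<r*K. G (s + x)) = (\<Sum>i<r. W ((i + s) mod r) ((i+s) div r))" .
  have b1: "(\<Sum>i<r. lo ((i + s) mod r)) \<le> (\<Sum>i<r. W ((i + s) mod r) ((i+s) div r))"
    by (rule sum_mono) (use assms in \<open>auto simp: W_def\<close>)
  have b2: "(\<Sum>i<r. W ((i + s) mod r) ((i+s) div r)) \<le> (\<Sum>i<r. hi ((i + s) mod r))"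
    by (rule sum_mono) (use assms in \<open>auto simp: W_def\<close>)
  have p1: "(\<Sum>i<r. lo ((i + s) mod r)) = (\<Sum>i<r. lo (i mod r))"
    by (rule win_period[where g="\<lambda>i. lo (i mod r)"]) simp
  have p2: "(\<Sum>i<r. hi ((i + s) mod r)) = (\<Sum>i<r. hi (i mod r))"
    by (rule win_period[where g="\<lambda>i. hi (i mod r)"]) simp
  have "(\<Sum>i<r. lo (i mod r)) = (\<Sum>i<r. lo i)" "(\<Sum>i<r. hi (i mod r)) = (\<Sum>i<r. hi i)"
    by (rule sum.cong; simp)+
  then show ?thesis using eq b1 b2 p1 p2 by simp
qed



lemma primeset_finite: "finite (primeset m)"
  unfolding primeset_def by (rule finite_subset[of _ "{..<3*m}"]) auto

lemma rho_le: "rho m \<le> m - 1"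
proof -
  have "primeset m \<subseteq> {2*m<..<3*m}" unfolding primeset_def by auto
  then have "rho m \<le> card {2*m<..<3*m}" unfolding rho_def by (rule card_mono[rotated]) simp
  then show ?thesis by simp
qed

lemma pr_in: assumes "i < rho m" shows "pr m i \<in> primeset m"
proof -
  have "set (rev (sorted_list_of_set (primeset m))) = primeset m" using primeset_finite by simp
  moreover have "i < length (rev (sorted_list_of_set (primeset m)))" using assms unfolding rho_def by simp
  ultimately show ?thesis unfolding pr_def by (metis nth_mem)
qed

lemma pr_props: assumes "i < rho m"
  shows "prime (pr m i)" "2*m < pr m i" "pr m i < 3*m" "2 * rho m < pr m i"
proof -
  show "prime (pr m i)" "2*m < pr m i" "pr m i < 3*m" using pr_in[OF assms] unfolding primeset_def by auto
  moreover have "rho m \<le> m - 1" by (rule rho_le)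
  ultimately show "2 * rho m < pr m i" by linarith
qed

lemma mult_in_pr:
  assumes "i < rho m" "1 \<le> lo" "hi \<le> 2 * rho m" "1 \<le> l"
  shows "mult_in m lo hi (l * pr m i) \<longleftrightarrow> lo \<le> l \<and> l \<le> hi"
proof
  assume "lo \<le> l \<and> l \<le> hi" then show "mult_in m lo hi (l * pr m i)"
    unfolding mult_in_def using assms by blast
next
  assume "mult_in m lo hi (l * pr m i)"
  then obtain i' l' where i': "i' < rho m" "lo \<le> l'" "l' \<le> hi" "l * pr m i = l' * pr m i'"
    unfolding mult_in_def by blast
  note P = pr_props[OF assms(1)] and P' = pr_props[OF i'(1)]
  show "lo \<le> l \<and> l \<le> hi"
  proof (cases "pr m i' = pr m i")
    case True
    then have "l = l'" using i'(4) P(2) by simp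
    then show ?thesis using i' by simp
  next
    case False
    have "pr m i dvd l' * pr m i'" using i'(4) by (metis dvd_triv_right)
    then have "pr m i dvd l' \<or> pr m i dvd pr m i'" using P(1) by (simp add: prime_dvd_mult_iff)
    moreover have "\<not> pr m i dvd pr m i'" using primes_dvd_imp_eq[OF P(1) P'(1)] False by auto
    moreover have "\<not> pr m i dvd l'"
    proof
      assume "pr m i dvd l'"
      moreover have "0 < l'" using i' assms by linarith
      ultimately have "pr m i \<le> l'" by (simp add: dvd_imp_le)
      then show False using i' assms P by linarith
    qed
    ultimately show ?thesis by blast
  qed
qed

definition cw :: "nat \<Rightarrow> nat \<Rightarrow> int" where
  "cw r l = (if even r then
       (if 1 \<le> l \<and> l \<le> 3 * r div 2 then 2
        else if 3 * r div 2 + 1 \<le> l \<and> l \<le> 2 * r then -2 else 0)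
     else
       (if 1 \<le> l \<and> l \<le> (3 * r - 1) div 2 then 2
        else if (3 * r + 1) div 2 \<le> l \<and> l \<le> 2 * r - 2 then -2
        else if 2 * r - 1 \<le> l \<and> l \<le> 2 * r then -1
        else 0))"

lemma abar_mult:
  assumes "i < rho m" "1 \<le> l"
  shows "abar m (l * pr m i) = cw (rho m) l"
proof -
  have r: "1 \<le> rho m" using assms by simp
  have e1: "mult_in m 1 (3 * rho m div 2) (l * pr m i) \<longleftrightarrow> 1 \<le> l \<and> l \<le> 3 * rho m div 2"
    by (rule mult_in_pr) (use assms in auto)
  have e2: "mult_in m (3 * rho m div 2 + 1) (2 * rho m) (l * pr m i) \<longleftrightarrow> 3 * rho m div 2 + 1 \<le> l \<and> l \<le> 2 * rho m"
    by (rule mult_in_pr) (use assms in auto)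
  have e3: "mult_in m 1 ((3 * rho m - 1) div 2) (l * pr m i) \<longleftrightarrow> 1 \<le> l \<and> l \<le> (3 * rho m - 1) div 2"
    by (rule mult_in_pr) (use assms in auto)
  have e4: "mult_in m ((3 * rho m + 1) div 2) (2 * rho m - 2) (l * pr m i) \<longleftrightarrow> (3 * rho m + 1) div 2 \<le> l \<and> l \<le> 2 * rho m - 2"
    by (rule mult_in_pr) (use assms r in auto)
  have e5: "mult_in m (2 * rho m - 1) (2 * rho m) (l * pr m i) \<longleftrightarrow> 2 * rho m - 1 \<le> l \<and> l \<le> 2 * rho m"
    by (rule mult_in_pr) (use assms r in auto)
  show ?thesis unfolding abar_def cw_def e1 e2 e3 e4 e5 by simp
qed

lemma cw_prefix:
  assumes "2 \<le> r"
  shows "(\<Sum>l=1..L. cw r l) =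
    (if even r then 2 * int (min L (3*r div 2)) - 2 * (int (min L (2*r)) - int (min L (3*r div 2)))
     else 2 * int (min L ((3*r-1) div 2)) - 2 * (int (min L (2*r-2)) - int (min L ((3*r-1) div 2)))
          - (int (min L (2*r)) - int (min L (2*r-2))))"
proof (cases "even r")
  case True
  then obtain t where t: "r = 2*t" by blast
  have c: "cw r l = (if 1 \<le> l \<and> l \<le> 3*t then 2 else if 3*t+1 \<le> l \<and> l \<le> 4*t then -2 else 0)" for l
    unfolding cw_def t by simp
  have "(\<Sum>l=1..L. cw r l) = 2 * int (min L (3*t)) - 2 * (int (min L (4*t)) - int (min L (3*t)))"
  proof (induction L)
    case 0 then show ?case by simp
  next
    case (Suc L)
    have "(\<Sum>l=1..Suc L. cw r l) = (\<Sum>l=1..L. cw r l) + cw r (Suc L)" by simp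
    then show ?case using Suc.IH unfolding c by (auto simp: min_def)
  qed
  then show ?thesis using True t by simp
next
  case False
  then obtain t where t: "r = 2*t+1" using oddE by blast
  have t1: "1 \<le> t" using assms t by simp
  have c: "cw r l = (if 1 \<le> l \<and> l \<le> 3*t+1 then 2 else if 3*t+2 \<le> l \<and> l \<le> 4*t then -2
          else if 4*t+1 \<le> l \<and> l \<le> 4*t+2 then -1 else 0)" for l
    unfolding cw_def t by simp
  have "(\<Sum>l=1..L. cw r l) = 2 * int (min L (3*t+1)) - 2 * (int (min L (4*t)) - int (min L (3*t+1)))
          - (int (min L (4*t+2)) - int (min L (4*t)))"
  proof (induction L)
    case 0 then show ?case by simp
  next
    case (Suc L)
    have "(\<Sum>l=1..Suc L. cw r l) = (\<Sum>l=1..L. cw r l) + cw r (Suc L)" by simp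
    then show ?case using Suc.IH t1 unfolding c by (auto simp: min_def)
  qed
  moreover have "(3*r-1) div 2 = 3*t+1" "2*r-2 = 4*t" "2*r = 4*t+2" using t by auto
  ultimately show ?thesis using False by simp
qed

lemma cw_full: assumes "2 \<le> r" "2 * r \<le> L" shows "(\<Sum>l=1..L. cw r l) = 2 * int r"
proof (cases "even r")
  case True then show ?thesis using cw_prefix[OF assms(1), of L] assms by (auto simp: min_def)
next
  case False
  then obtain t where t: "r = 2*t+1" using oddE by blast
  have "(3*r-1) div 2 = 3*t+1" "2*r-2 = 4*t" "2*r = 4*t+2" using t by auto
  then show ?thesis using False t cw_prefix[OF assms(1), of L] assms by (auto simp: min_def)
qed

lemma cw_pos: assumes "2 \<le> r" "1 \<le> L" shows "0 < (\<Sum>l=1..L. cw r l)"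
  using cw_prefix[OF assms(1), of L] assms by (auto simp: min_def)



lemma abar_le2: "abar m j \<le> 2"
  unfolding abar_def by simp

lemma abar_pos:
  assumes "0 < abar m j"
  shows "\<exists>i'<rho m. \<exists>l. 1 \<le> l \<and> l \<le> 2 * rho m \<and> j = l * pr m i'"
proof -
  have "mult_in m 1 (3 * rho m div 2) j \<or> mult_in m 1 ((3 * rho m - 1) div 2) j"
    using assms unfolding abar_def by (auto split: if_splits)
  then show ?thesis unfolding mult_in_def by fastforce
qed

lemma basic_facts:
  assumes "m \<ge> 1" "rho m \<ge> 2" "i < rho m"
  shows "0 < pr m i" "2 * rho m \<le> mu m i" "2 \<le> kk m" "beta m i = kk m mod pr m i"
        "mu m i = kk m div pr m i" "thetabar m = 2 * int (rho m)" "pr m i \<le> kk m"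
proof -
  note P = pr_props[OF assms(3)]
  show "0 < pr m i" using P by simp
  have "pr m i \<le> 3*m - 1" using P by simp
  then have "2 * rho m * pr m i \<le> 2 * rho m * (3*m - 1)" by (rule mult_le_mono2)
  also have "\<dots> \<le> kk m" unfolding kk_def using assms by (simp add: algebra_simps)
  finally have a: "2 * rho m * pr m i \<le> kk m" .
  then show "2 * rho m \<le> mu m i" unfolding mu_def using P by (simp add: less_eq_div_iff_mult_less_eq)
  have "pr m i \<le> 2 * rho m * pr m i" using assms by simp
  then show "pr m i \<le> kk m" using a by linarith
  have "1 * 2 \<le> (6*m-1) * rho m" using assms by (intro mult_le_mono) auto
  then show "2 \<le> kk m" unfolding kk_def by simp
  show "beta m i = kk m mod pr m i" unfolding beta_def mu_def by (simp add: minus_mult_div_eq_mod)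
  show "mu m i = kk m div pr m i" by (simp add: mu_def)
  show "thetabar m = 2 * int (rho m)" by (simp add: thetabar_def)
qed

lemma SUB:
  assumes "m \<ge> 1" "rho m \<ge> 2" "i < rho m"
    and v01: "\<forall>j\<in>{1..kk m}. 0 \<le> v j \<and> v j \<le> 1"
    and vres: "\<forall>j1\<in>{1..kk m}. \<forall>j2\<in>{1..kk m}. v j1 \<noteq> 0 \<longrightarrow> v j2 \<noteq> 0 \<longrightarrow> j1 mod pr m i = j2 mod pr m i"
    and vnd: "\<forall>j\<in>{1..kk m}. v j \<noteq> 0 \<longrightarrow> \<not> pr m i dvd j"
  shows "(\<Sum>j=1..kk m. abar m j * v j) < thetabar m"
proof -
  define p where "p = pr m i"
  define S where "S = {j\<in>{1..kk m}. v j \<noteq> 0 \<and> 0 < abar m j}"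
  have finS: "finite S" unfolding S_def by simp
  have "(\<Sum>j=1..kk m. abar m j * v j) \<le> (\<Sum>j=1..kk m. (if j \<in> S then 2 else 0))"
  proof (rule sum_mono)
    fix j assume j: "j \<in> {1..kk m}"
    show "abar m j * v j \<le> (if j \<in> S then 2 else 0)"
    proof (cases "j \<in> S")
      case True
      then have "abar m j * v j \<le> 2 * 1" using v01 j abar_le2[of m j]
        by (intro mult_mono) (auto simp: S_def)
      then show ?thesis using True by simp
    next
      case False
      then have "v j = 0 \<or> abar m j \<le> 0" using j by (auto simp: S_def)
      then show ?thesis using False v01 j by (auto simp: mult_nonpos_nonneg)
    qed
  qed
  also have "\<dots> = (\<Sum>j\<in>{1..kk m} \<inter> S. 2)" by (rule sum.inter_restrict[symmetric]) simp
  also have "{1..kk m} \<inter> S = S" unfolding S_def by auto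
  also have "(\<Sum>j\<in>S. (2::int)) = 2 * int (card S)" by simp
  finally have le: "(\<Sum>j=1..kk m. abar m j * v j) \<le> 2 * int (card S)" .
  have "\<forall>j\<in>S. \<exists>i'. i' < rho m \<and> (\<exists>l. 1 \<le> l \<and> l \<le> 2 * rho m \<and> j = l * pr m i')"
    using abar_pos unfolding S_def by blast
  then obtain g L where gL: "\<forall>j\<in>S. g j < rho m \<and> 1 \<le> L j \<and> L j \<le> 2 * rho m \<and> j = L j * pr m (g j)"
    by metis
  note P = pr_props[OF assms(3)]
  have gi: "g j \<noteq> i" "pr m (g j) \<noteq> p" if "j \<in> S" for j
  proof -
    have "\<not> p dvd j" using that vnd unfolding S_def p_def by auto
    then show "pr m (g j) \<noteq> p" using gL that by (metis dvd_triv_right)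
    then show "g j \<noteq> i" unfolding p_def by auto
  qed
  have inj: "inj_on g S"
  proof (rule inj_onI)
    fix j1 j2 assume j: "j1 \<in> S" "j2 \<in> S" "g j1 = g j2"
    define q where "q = pr m (g j1)"
    have q: "prime q" "q \<noteq> p" using pr_props(1) gL j gi unfolding q_def by auto
    have e: "j1 = L j1 * q" "j2 = L j2 * q" using gL j unfolding q_def by auto
    have "j1 mod p = j2 mod p" using vres j unfolding S_def p_def by auto
    then have "[L j1 * q = L j2 * q] (mod p)" using e by (simp add: cong_def)
    moreover have "coprime q p" using q P(1) unfolding p_def by (simp add: primes_coprime)
    ultimately have "[L j1 = L j2] (mod p)" by (simp add: cong_mult_rcancel_nat)
    moreover have "L j1 < p" "L j2 < p" using gL j P unfolding p_def by (meson le_less_trans)+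
    ultimately have "L j1 = L j2" by (simp add: cong_less_imp_eq_nat)
    then show "j1 = j2" using e by simp
  qed
  have "g ` S \<subseteq> {..<rho m} - {i}" using gL gi by auto
  then have "card (g ` S) \<le> card ({..<rho m} - {i})" by (rule card_mono[rotated]) simp
  then have "card S \<le> rho m - 1" using card_image[OF inj] assms(3) by simp
  then have "2 * int (card S) < 2 * int (rho m)" using assms by linarith
  then show ?thesis using le by (simp add: thetabar_def)
qed



definition clsf :: "nat \<Rightarrow> nat \<Rightarrow> nat \<Rightarrow> int" where
  "clsf m i x = (if x mod pr m i = kk m mod pr m i then 1 else 0)"

definition zf :: "nat \<Rightarrow> nat \<Rightarrow> nat \<Rightarrow> int" where
  "zf m i x = (if (x + 1) mod pr m i = kk m mod pr m i \<and> x + 1 < kk m then 1 else 0)"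

lemma sub_mod:
  fixes p :: nat
  assumes "j1 \<le> t" "j2 \<le> t" "(t - j1) mod p = (t - j2) mod p"
  shows "j1 mod p = j2 mod p"
proof (cases "j1 \<le> j2")
  case True
  have "p dvd (t - j1) - (t - j2)" using assms True by (subst mod_eq_dvd_iff_nat[symmetric]) auto
  moreover have "(t - j1) - (t - j2) = j2 - j1" using assms True by simp
  ultimately show ?thesis using True by (metis mod_eq_dvd_iff_nat)
next
  case False
  have "p dvd (t - j2) - (t - j1)" using assms False by (subst mod_eq_dvd_iff_nat[symmetric]) auto
  moreover have "(t - j2) - (t - j1) = j1 - j2" using assms False by simp
  ultimately show ?thesis using False by (metis mod_eq_dvd_iff_nat nat_le_linear)
qed

lemma dvd_sub_mod:
  fixes p :: nat
  assumes "j \<le> t"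
  shows "(t - j) mod p = t mod p \<longleftrightarrow> p dvd j"
proof -
  have "t mod p = (t - j) mod p \<longleftrightarrow> p dvd t - (t - j)" by (rule mod_eq_dvd_iff_nat) simp
  moreover have "t - (t - j) = j" using assms by simp
  ultimately show ?thesis by auto
qed

lemma cls_recs:
  assumes "m \<ge> 1" "rho m \<ge> 2" "i < rho m"
  shows "recs (abar m) (kk m) (thetabar m) (clsf m i)"
  unfolding recs_def
proof (intro allI impI)
  fix t assume t: "kk m \<le> t"
  note BF = basic_facts[OF assms]
  define p where "p = pr m i"
  define K where "K = kk m"
  have p0: "0 < p" using BF unfolding p_def by simp
  show "clsf m i t = ind ((\<Sum>j=1..kk m. abar m j * clsf m i (t - j)) - thetabar m)"
  proof (cases "t mod p = K mod p")
    case True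
    have v: "clsf m i (t - j) = (if p dvd j then 1 else 0)" if "j \<in> {1..K}" for j
      using that t True dvd_sub_mod[of j t p] unfolding clsf_def p_def K_def by auto
    have "(\<Sum>j=1..K. abar m j * clsf m i (t - j)) = (\<Sum>j=1..K. abar m j * (if p dvd j then 1 else 0))"
      by (rule sum.cong) (simp_all add: v)
    also have "\<dots> = (\<Sum>l=1..K div p. abar m (l*p) * (if p dvd (l*p) then 1 else 0))"
      by (rule sum_mult) (use p0 in auto)
    also have "\<dots> = (\<Sum>l=1..K div p. cw (rho m) l)"
      by (rule sum.cong) (use abar_mult[OF assms(3)] in \<open>auto simp: p_def\<close>)
    also have "\<dots> = 2 * int (rho m)"
      by (rule cw_full) (use assms BF in \<open>auto simp: p_def K_def\<close>)
    finally show ?thesis using True BF unfolding clsf_def ind_def p_def K_def by simp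
  next
    case False
    have "(\<Sum>j=1..K. abar m j * clsf m i (t - j)) < thetabar m"
      unfolding K_def
    proof (rule SUB[OF assms])
      show "\<forall>j\<in>{1..kk m}. 0 \<le> clsf m i (t - j) \<and> clsf m i (t - j) \<le> 1" by (simp add: clsf_def)
      show "\<forall>j1\<in>{1..kk m}. \<forall>j2\<in>{1..kk m}. clsf m i (t - j1) \<noteq> 0 \<longrightarrow> clsf m i (t - j2) \<noteq> 0 \<longrightarrow> j1 mod pr m i = j2 mod pr m i"
      proof (intro ballI impI)
        fix j1 j2 assume j: "j1 \<in> {1..kk m}" "j2 \<in> {1..kk m}" "clsf m i (t - j1) \<noteq> 0" "clsf m i (t - j2) \<noteq> 0"
        then have "(t - j1) mod pr m i = (t - j2) mod pr m i" by (simp add: clsf_def split: if_splits)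
        moreover have "j1 \<le> t" "j2 \<le> t" using j t by auto
        ultimately show "j1 mod pr m i = j2 mod pr m i" using sub_mod by blast
      qed
      show "\<forall>j\<in>{1..kk m}. clsf m i (t - j) \<noteq> 0 \<longrightarrow> \<not> pr m i dvd j"
      proof (intro ballI impI notI)
        fix j assume j: "j \<in> {1..kk m}" "clsf m i (t - j) \<noteq> 0" "pr m i dvd j"
        then have "(t - j) mod pr m i = kk m mod pr m i" by (simp add: clsf_def split: if_splits)
        moreover have "(t - j) mod pr m i = t mod pr m i" using dvd_sub_mod[of j t "pr m i"] j t by auto
        ultimately show False using False unfolding p_def K_def by simp
      qed
    qed
    then show ?thesis using False unfolding clsf_def ind_def p_def K_def by simp
  qed
qed


lemma zf_val:
  assumes "j \<le> t"
  shows "zf m i (t - j) = (if (t + 1 - j) mod pr m i = kk m mod pr m i \<and> t + 1 - j < kk m then 1 else 0)"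
  using assms unfolding zf_def by (simp add: Suc_diff_le)

lemma zf_recs:
  assumes "m \<ge> 1" "rho m \<ge> 2" "i < rho m"
  shows "recs (abar m) (kk m) (thetabar m) (zf m i)"
  unfolding recs_def
proof (intro allI impI)
  fix t assume t: "kk m \<le> t"
  note BF = basic_facts[OF assms]
  define p where "p = pr m i"
  define K where "K = kk m"
  define u where "u = t + 1"
  have p0: "0 < p" using BF unfolding p_def by simp
  have z0: "zf m i t = 0" using t unfolding zf_def by simp
  have "(\<Sum>j=1..K. abar m j * zf m i (t - j)) < thetabar m"
  proof (cases "u mod p = K mod p")
    case True
    have v: "zf m i (t - j) = (if p dvd j then (if u - j < K then 1 else 0) else 0)" if "j \<in> {1..K}" for j
    proof -
      have jt: "j \<le> u" "j \<le> t" using that t unfolding K_def u_def by auto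
      have "(u - j) mod p = u mod p \<longleftrightarrow> p dvd j" by (rule dvd_sub_mod[OF jt(1)])
      then show ?thesis using zf_val[OF jt(2), of m i] True unfolding u_def p_def K_def by auto
    qed
    have "p dvd u - K" using True t by (subst mod_eq_dvd_iff_nat[symmetric]) (auto simp: u_def K_def)
    then obtain c where c: "u - K = p * c" by blast
    have uK: "u = K + c * p" using c t unfolding u_def K_def by (simp add: mult.commute)
    have c1: "1 \<le> c" using uK t unfolding u_def K_def by (cases c) auto
    have "(\<Sum>j=1..K. abar m j * zf m i (t - j)) = (\<Sum>j=1..K. abar m j * (if p dvd j then (if u - j < K then 1 else 0) else 0))"
      by (rule sum.cong) (simp_all add: v)
    also have "\<dots> = (\<Sum>l=1..K div p. abar m (l*p) * (if p dvd (l*p) then (if u - l*p < K then 1 else 0) else 0))"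
      by (rule sum_mult) (use p0 in auto)
    also have "\<dots> = (\<Sum>l=1..K div p. (if c < l then cw (rho m) l else 0))"
    proof (rule sum.cong, simp)
      fix l assume l: "l \<in> {1..K div p}"
      have a: "abar m (l*p) = cw (rho m) l" using abar_mult[OF assms(3)] l unfolding p_def by auto
      have "l * p \<le> K" using l p0 by (simp add: less_eq_div_iff_mult_less_eq)
      moreover have "c < l \<Longrightarrow> c * p < l * p" using p0 by simp
      moreover have "l \<le> c \<Longrightarrow> l * p \<le> c * p" by simp
      ultimately have "u - l*p < K \<longleftrightarrow> c < l" using uK by linarith
      then show "abar m (l*p) * (if p dvd (l*p) then (if u - l*p < K then 1 else 0) else 0) = (if c < l then cw (rho m) l else 0)"
        using a by simp
    qed
    also have "\<dots> = (\<Sum>l=1..K div p. cw (rho m) l) - (\<Sum>l=1..K div p. (if l \<in> {..c} then cw (rho m) l else 0))"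
      by (simp add: sum_subtractf[symmetric], rule sum.cong, auto)
    also have "(\<Sum>l=1..K div p. (if l \<in> {..c} then cw (rho m) l else 0)) = (\<Sum>l\<in>{1..K div p} \<inter> {..c}. cw (rho m) l)"
      by (rule sum.inter_restrict[symmetric]) simp
    also have "{1..K div p} \<inter> {..c} = {1..min c (K div p)}" by auto
    also have "(\<Sum>l=1..K div p. cw (rho m) l) = 2 * int (rho m)"
      by (rule cw_full) (use assms BF in \<open>auto simp: p_def K_def\<close>)
    also have "0 < (\<Sum>l=1..min c (K div p). cw (rho m) l)"
      by (rule cw_pos) (use assms BF c1 in \<open>auto simp: p_def K_def\<close>)
    then have "2 * int (rho m) - (\<Sum>l=1..min c (K div p). cw (rho m) l) < thetabar m"
      using BF by simp
    finally show ?thesis .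
  next
    case False
    show ?thesis unfolding K_def
    proof (rule SUB[OF assms])
      show "\<forall>j\<in>{1..kk m}. 0 \<le> zf m i (t - j) \<and> zf m i (t - j) \<le> 1" by (simp add: zf_def)
      show "\<forall>j1\<in>{1..kk m}. \<forall>j2\<in>{1..kk m}. zf m i (t - j1) \<noteq> 0 \<longrightarrow> zf m i (t - j2) \<noteq> 0 \<longrightarrow> j1 mod pr m i = j2 mod pr m i"
      proof (intro ballI impI)
        fix j1 j2 assume j: "j1 \<in> {1..kk m}" "j2 \<in> {1..kk m}" "zf m i (t - j1) \<noteq> 0" "zf m i (t - j2) \<noteq> 0"
        have jt: "j1 \<le> t" "j2 \<le> t" "j1 \<le> u" "j2 \<le> u" using j t unfolding u_def by auto
        have "(u - j1) mod pr m i = (u - j2) mod pr m i"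
          using j(3,4) zf_val[OF jt(1), of m i] zf_val[OF jt(2), of m i] unfolding u_def by (simp split: if_splits)
        then show "j1 mod pr m i = j2 mod pr m i" using sub_mod jt by blast
      qed
      show "\<forall>j\<in>{1..kk m}. zf m i (t - j) \<noteq> 0 \<longrightarrow> \<not> pr m i dvd j"
      proof (intro ballI impI notI)
        fix j assume j: "j \<in> {1..kk m}" "zf m i (t - j) \<noteq> 0" "pr m i dvd j"
        have jt: "j \<le> t" "j \<le> u" using j t unfolding u_def by auto
        have "(u - j) mod pr m i = kk m mod pr m i"
          using j(2) zf_val[OF jt(1), of m i] unfolding u_def by (simp split: if_splits)
        moreover have "(u - j) mod pr m i = u mod pr m i" using dvd_sub_mod[OF jt(2), of "pr m i"] j by auto
        ultimately show False using False unfolding p_def K_def by simp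
      qed
    qed
  qed
  then show "zf m i t = ind ((\<Sum>j=1..kk m. abar m j * zf m i (t - j)) - thetabar m)"
    using z0 unfolding ind_def K_def by simp
qed



lemma decouple:
  assumes "i < rho m"
  shows "recs (abar m) (kk m) (thetabar m) (\<lambda>j. thr (bb m) (hh m) init (thetabar m) (rho m * j + i))"
  unfolding recs_def
proof (intro allI impI)
  fix t assume t: "kk m \<le> t"
  define Y where "Y = thr (bb m) (hh m) init (thetabar m)"
  define r where "r = rho m"
  have r0: "0 < r" using assms unfolding r_def by simp
  have ge: "hh m \<le> r * t + i" unfolding hh_def r_def using t by (simp add: trans_le_add1)
  have "Y (r * t + i) = ind ((\<Sum>f=1..hh m. bb m f * Y (r * t + i - f)) - thetabar m)"
    using thr_recs[of "bb m" "hh m" "thetabar m" init] ge unfolding recs_def Y_def by blast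
  moreover have "(\<Sum>f=1..hh m. bb m f * Y (r * t + i - f)) = (\<Sum>l=1..kk m. abar m l * Y (r * (t - l) + i))"
  proof -
    have "(\<Sum>f=1..hh m. bb m f * Y (r * t + i - f)) = (\<Sum>l=1..hh m div r. bb m (l*r) * Y (r * t + i - l*r))"
      by (rule sum_mult) (use r0 in \<open>auto simp: bb_def r_def\<close>)
    also have "hh m div r = kk m" unfolding hh_def r_def using r0 r_def by simp
    also have "(\<Sum>l=1..kk m. bb m (l*r) * Y (r * t + i - l*r)) = (\<Sum>l=1..kk m. abar m l * Y (r * (t - l) + i))"
    proof (rule sum.cong, simp)
      fix l assume l: "l \<in> {1..kk m}"
      have "bb m (l*r) = abar m l" unfolding bb_def r_def using l r0 r_def by (auto simp: mult.commute)
      moreover have "r * t + i - l*r = r * (t - l) + i" using l t by (simp add: diff_mult_distrib2 mult.commute)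
      ultimately show "bb m (l*r) * Y (r * t + i - l*r) = abar m l * Y (r * (t - l) + i)" by simp
    qed
    finally show ?thesis .
  qed
  ultimately show "Y (r * t + i) = ind ((\<Sum>j=1..kk m. abar m j * Y (r * (t - j) + i)) - thetabar m)"
    by simp
qed

lemma comp_init:
  assumes "i < rho m" "j < kk m"
  shows "thr (bb m) (hh m) init (thetabar m) (rho m * j + i) = init (rho m * j + i)"
proof (rule thr_init)
  have "rho m * j + i < rho m * j + rho m" using assms by simp
  also have "\<dots> = rho m * (j + 1)" by simp
  also have "\<dots> \<le> rho m * kk m" using assms by (intro mult_le_mono2) simp
  finally show "rho m * j + i < hh m" unfolding hh_def .
qed

lemma xa_eq:
  assumes "m \<ge> 1" "rho m \<ge> 2" "i < rho m"
  shows "xa m i x = clsf m i x"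
  unfolding xa_def
proof (rule recs_unique[OF thr_recs cls_recs[OF assms]], intro allI impI)
  fix t assume t: "t < kk m"
  note BF = basic_facts[OF assms]
  define p where "p = pr m i"
  define K where "K = kk m"
  have p0: "0 < p" using BF p_def by simp
  have "(\<exists>l. l < mu m i \<and> t = beta m i + l * pr m i) \<longleftrightarrow> t mod p = K mod p"
  proof
    assume "\<exists>l. l < mu m i \<and> t = beta m i + l * pr m i"
    then obtain l where "t = K mod p + l * p" using BF unfolding p_def K_def by auto
    then show "t mod p = K mod p" by simp
  next
    assume h: "t mod p = K mod p"
    have te: "t = K mod p + (t div p) * p" using h div_mult_mod_eq[of t p] by simp
    have "t div p < K div p"
    proof (rule ccontr)
      assume "\<not> t div p < K div p"
      then have "(K div p) * p \<le> (t div p) * p" by simp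
      then have "K \<le> t" using te div_mult_mod_eq[of K p] by linarith
      then show False using t K_def by simp
    qed
    then show "\<exists>l. l < mu m i \<and> t = beta m i + l * pr m i"
      using te BF unfolding p_def K_def by auto
  qed
  moreover have "thr (abar m) (kk m) (x_init m i) (thetabar m) t = x_init m i t" by (rule thr_init[OF t])
  ultimately show "thr (abar m) (kk m) (x_init m i) (thetabar m) t = clsf m i t"
    unfolding x_init_def clsf_def p_def K_def by (simp del: thr.simps)
qed

lemma yy_comp:
  assumes "m \<ge> 1" "rho m \<ge> 2" "i < rho m"
  shows "yy m (rho m * j + i) = clsf m i (j + 1)"
proof -
  have "yy m (rho m * j + i) = clsf m i (j + 1)"
  proof (rule recs_unique[where a="abar m" and K="kk m" and \<theta>="thetabar m" and s="\<lambda>j. yy m (rho m * j + i)" and s'="\<lambda>j. clsf m i (j + 1)"])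
    show "recs (abar m) (kk m) (thetabar m) (\<lambda>j. yy m (rho m * j + i))"
      unfolding yy_def by (rule decouple[OF assms(3)])
    show "recs (abar m) (kk m) (thetabar m) (\<lambda>j. clsf m i (j + 1))"
      by (rule recs_shift[OF cls_recs[OF assms]])
    show "\<forall>t<kk m. yy m (rho m * t + i) = clsf m i (t + 1)"
    proof (intro allI impI)
      fix t assume t: "t < kk m"
      have "yy m (rho m * t + i) = y_init m (rho m * t + i)"
        unfolding yy_def by (rule comp_init[OF assms(3) t])
      also have "\<dots> = xa m i (1 + t)" unfolding y_init_def using assms(3) by simp
      finally show "yy m (rho m * t + i) = clsf m i (t + 1)" using xa_eq[OF assms] by simp
    qed
  qed
  then show ?thesis by simp
qed

lemma ww_comp_lo:
  assumes "m \<ge> 1" "rho m \<ge> 2" "i < rho m" "i \<le> d"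
  shows "ww m d (rho m * j + i) = zf m i j"
proof -
  note BF = basic_facts[OF assms(1-3)]
  have "ww m d (rho m * j + i) = zf m i j"
  proof (rule recs_unique[where a="abar m" and K="kk m" and \<theta>="thetabar m" and s="\<lambda>j. ww m d (rho m * j + i)" and s'="zf m i"])
    show "recs (abar m) (kk m) (thetabar m) (\<lambda>j. ww m d (rho m * j + i))"
      unfolding ww_def by (rule decouple[OF assms(3)])
    show "recs (abar m) (kk m) (thetabar m) (zf m i)" by (rule zf_recs[OF assms(1-3)])
    show "\<forall>t<kk m. ww m d (rho m * t + i) = zf m i t"
    proof (intro allI impI)
      fix t assume t: "t < kk m"
      have "ww m d (rho m * t + i) = w_init m d (rho m * t + i)"
        unfolding ww_def by (rule comp_init[OF assms(3) t])
      also have "\<dots> = (if t \<le> kk m - 2 then xa m i (1 + t) else 1 - xa m i (kk m))"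
        unfolding w_init_def Let_def using assms(3,4) by simp
      also have "\<dots> = zf m i t"
        using t BF unfolding xa_eq[OF assms(1-3)] clsf_def zf_def by (auto simp: add.commute)
      finally show "ww m d (rho m * t + i) = zf m i t" .
    qed
  qed
  then show ?thesis by simp
qed

lemma ww_comp_hi:
  assumes "m \<ge> 1" "rho m \<ge> 2" "i < rho m" "d < i"
  shows "ww m d (rho m * j + i) = clsf m i (j + (Lcm (pr m ` {0..d}) + 1))"
proof -
  define c where "c = Lcm (pr m ` {0..d}) + 1"
  have "ww m d (rho m * j + i) = clsf m i (j + c)"
  proof (rule recs_unique[where a="abar m" and K="kk m" and \<theta>="thetabar m" and s="\<lambda>j. ww m d (rho m * j + i)" and s'="\<lambda>j. clsf m i (j + c)"])
    show "recs (abar m) (kk m) (thetabar m) (\<lambda>j. ww m d (rho m * j + i))"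
      unfolding ww_def by (rule decouple[OF assms(3)])
    show "recs (abar m) (kk m) (thetabar m) (\<lambda>j. clsf m i (j + c))"
      by (rule recs_shift[OF cls_recs[OF assms(1-3)]])
    show "\<forall>t<kk m. ww m d (rho m * t + i) = clsf m i (t + c)"
    proof (intro allI impI)
      fix t assume t: "t < kk m"
      have "ww m d (rho m * t + i) = w_init m d (rho m * t + i)"
        unfolding ww_def by (rule comp_init[OF assms(3) t])
      also have "\<dots> = yy m (rho m * t + i + L1 m d)"
        unfolding w_init_def Let_def using assms(3,4) by simp
      also have "rho m * t + i + L1 m d = rho m * (t + Lcm (pr m ` {0..d})) + i"
        unfolding L1_def by (simp add: algebra_simps)
      also have "yy m \<dots> = clsf m i (t + c)" unfolding c_def
        by (subst yy_comp[OF assms(1-3)]) (simp add: ac_simps)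
      finally show "ww m d (rho m * t + i) = clsf m i (t + c)" .
    qed
  qed
  then show ?thesis by (simp add: c_def)
qed



lemma clsf_win:
  assumes "m \<ge> 1" "rho m \<ge> 2" "i < rho m"
  shows "int (mu m i) \<le> (\<Sum>q<kk m. clsf m i (q + c)) \<and> (\<Sum>q<kk m. clsf m i (q + c)) \<le> int (mu m i) + 1"
proof -
  note BF = basic_facts[OF assms]
  have "(\<Sum>q<kk m. clsf m i (q + c)) = (\<Sum>q<kk m. (if (q + c) mod pr m i = kk m mod pr m i then 1 else 0))"
    unfolding clsf_def by simp
  moreover have "kk m mod pr m i < pr m i" using BF by simp
  ultimately show ?thesis using cls_window[of "pr m i" "kk m mod pr m i" "kk m" c] BF by simp
qed

lemma win_y:
  assumes "m \<ge> 1" "rho m \<ge> 2" "i < rho m"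
  shows "int (mu m i) \<le> (\<Sum>q<kk m. yy m (rho m * (q + c) + i)) \<and> (\<Sum>q<kk m. yy m (rho m * (q + c) + i)) \<le> int (mu m i) + 1"
proof -
  have "(\<Sum>q<kk m. yy m (rho m * (q + c) + i)) = (\<Sum>q<kk m. clsf m i (q + (c + 1)))"
    by (rule sum.cong) (simp, simp only: yy_comp[OF assms] add.assoc)
  then show ?thesis using clsf_win[OF assms, of "c+1"] by simp
qed

lemma win_w_hi:
  assumes "m \<ge> 1" "rho m \<ge> 2" "i < rho m" "d < i"
  shows "int (mu m i) \<le> (\<Sum>q<kk m. ww m d (rho m * (q + c) + i)) \<and> (\<Sum>q<kk m. ww m d (rho m * (q + c) + i)) \<le> int (mu m i) + 1"
proof -
  have "(\<Sum>q<kk m. ww m d (rho m * (q + c) + i)) = (\<Sum>q<kk m. clsf m i (q + (c + Lcm (pr m ` {0..d}) + 1)))"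
    by (rule sum.cong) (simp, simp only: ww_comp_hi[OF assms] add.assoc)
  then show ?thesis using clsf_win[OF assms(1-3), of "c + Lcm (pr m ` {0..d}) + 1"] by simp
qed

lemma win_w_lo:
  assumes "m \<ge> 1" "rho m \<ge> 2" "i < rho m" "i \<le> d"
  shows "0 \<le> (\<Sum>q<kk m. ww m d (rho m * (q + c) + i)) \<and> (\<Sum>q<kk m. ww m d (rho m * (q + c) + i)) \<le> int (mu m i)"
proof -
  note BF = basic_facts[OF assms(1-3)]
  define K where "K = kk m"
  have K2: "2 \<le> K" using BF K_def by simp
  have e: "(\<Sum>q<kk m. ww m d (rho m * (q + c) + i)) = (\<Sum>q<K. zf m i (q + c))"
    unfolding K_def by (rule sum.cong) (simp_all add: ww_comp_lo[OF assms])
  have nn: "0 \<le> zf m i x" for x by (simp add: zf_def)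
  have "(\<Sum>q<K. zf m i (q + c)) = (\<Sum>x\<in>{0+c..<K+c}. zf m i x)"
    using sum.shift_bounds_nat_ivl[of "zf m i" 0 c K] by (simp add: atLeast0LessThan)
  also have "\<dots> \<le> (\<Sum>x<K+c. zf m i x)" by (rule sum_mono2) (auto simp: nn)
  also have "\<dots> = (\<Sum>x<K-1. zf m i x)"
    by (rule sum.mono_neutral_right) (auto simp: zf_def K_def)
  also have "\<dots> = (\<Sum>x<K-1. clsf m i (x + 1))"
    by (rule sum.cong) (auto simp: zf_def clsf_def K_def)
  finally have u: "(\<Sum>q<K. zf m i (q + c)) \<le> (\<Sum>x<K-1. clsf m i (x + 1))" .
  obtain K' where K': "K = Suc K'" using K2 by (cases K) auto
  have "(\<Sum>x<K. clsf m i (x + 1)) = (\<Sum>x<K-1. clsf m i (x + 1)) + clsf m i K" using K' by simp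
  then have s: "(\<Sum>x<K. clsf m i (x + 1)) = (\<Sum>x<K-1. clsf m i (x + 1)) + 1"
    unfolding clsf_def K_def by simp
  have "(\<Sum>x<K. clsf m i (x + 1)) \<le> int (mu m i) + 1" using clsf_win[OF assms(1-3), of 1] K_def by simp
  moreover have "0 \<le> (\<Sum>q<K. zf m i (q + c))" by (rule sum_nonneg) (simp add: nn)
  ultimately show ?thesis using e u s by linarith
qed

theorem lemma14:
  fixes m n d :: nat
  assumes "m \<ge> 1" and "rho m \<ge> 2"
    and "n \<ge> hh m" and "d \<le> rho m - 1"
  shows "(\<Sum>i<rho m. int (mu m i)) \<le> (\<Sum>f=1..hh m. yy m (n - f))
         \<and> (\<Sum>f=1..hh m. yy m (n - f)) \<le> int (rho m) + (\<Sum>i<rho m. int (mu m i))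
         \<and> (\<Sum>i=d+1..rho m - 1. int (mu m i)) \<le> (\<Sum>f=1..hh m. ww m d (n - f))
         \<and> (\<Sum>f=1..hh m. ww m d (n - f))
              \<le> int (rho m) - int d - 1 + (\<Sum>i<rho m. int (mu m i))"
proof -
  define s where "s = n - hh m"
  have r0: "0 < rho m" using assms by simp
  have re: "\<And>G::nat\<Rightarrow>int. (\<Sum>f=1..hh m. G (n - f)) = (\<Sum>x<rho m * kk m. G (s + x))"
  proof -
    fix G :: "nat \<Rightarrow> int"
    show "(\<Sum>f=1..hh m. G (n - f)) = (\<Sum>x<rho m * kk m. G (s + x))"
      by (rule sum.reindex_bij_witness[where i="\<lambda>x. hh m - x" and j="\<lambda>f. hh m - f"])
         (use assms in \<open>auto simp: s_def hh_def\<close>)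
  qed
  have Y: "(\<Sum>i<rho m. int (mu m i)) \<le> (\<Sum>x<rho m * kk m. yy m (s + x))
      \<and> (\<Sum>x<rho m * kk m. yy m (s + x)) \<le> (\<Sum>i<rho m. int (mu m i) + 1)"
    by (rule assemble[OF r0]) (use win_y assms in blast)
  define lo where "lo i = (if d < i then int (mu m i) else 0)" for i
  define hi where "hi i = (if d < i then int (mu m i) + 1 else int (mu m i))" for i
  have W: "(\<Sum>i<rho m. lo i) \<le> (\<Sum>x<rho m * kk m. ww m d (s + x))
      \<and> (\<Sum>x<rho m * kk m. ww m d (s + x)) \<le> (\<Sum>i<rho m. hi i)"
  proof (rule assemble[OF r0], intro allI impI)
    fix i c assume i: "i < rho m"
    show "lo i \<le> (\<Sum>q<kk m. ww m d (rho m * (q + c) + i)) \<and> (\<Sum>q<kk m. ww m d (rho m * (q + c) + i)) \<le> hi i"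
    proof (cases "d < i")
      case True then show ?thesis using win_w_hi[OF assms(1,2) i True] by (simp add: lo_def hi_def)
    next
      case False then show ?thesis using win_w_lo[OF assms(1,2) i] by (simp add: lo_def hi_def)
    qed
  qed
  have "(\<Sum>i<rho m. lo i) = (\<Sum>i\<in>{..<rho m} \<inter> {i. d < i}. int (mu m i))"
    unfolding lo_def by (simp add: sum.inter_restrict)
  also have "{..<rho m} \<inter> {i. d < i} = {d+1..rho m - 1}" using r0 by auto
  finally have lo_eq: "(\<Sum>i<rho m. lo i) = (\<Sum>i=d+1..rho m - 1. int (mu m i))" .
  have "(\<Sum>i<rho m. hi i) = (\<Sum>i<rho m. int (mu m i)) + (\<Sum>i<rho m. (if d < i then 1 else 0))"
    unfolding hi_def sum.distrib[symmetric] by (rule sum.cong) auto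
  also have "(\<Sum>i<rho m. (if d < i then 1 else 0::int)) = int (card ({..<rho m} \<inter> {i. d < i}))"
    by (simp add: sum.If_cases)
  also have "{..<rho m} \<inter> {i. d < i} = {d+1..rho m - 1}" using r0 by auto
  also have "int (card {d+1..rho m - 1}) = int (rho m) - int d - 1" using assms r0 by simp
  finally have hi_eq: "(\<Sum>i<rho m. hi i) = int (rho m) - int d - 1 + (\<Sum>i<rho m. int (mu m i))" by simp
  have "(\<Sum>i<rho m. int (mu m i) + 1) = int (rho m) + (\<Sum>i<rho m. int (mu m i))"
    by (simp add: sum.distrib)
  then show ?thesis using Y W lo_eq hi_eq re[of "yy m"] re[of "ww m d"] by simp
qed


end
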